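(* Let $D_{act} > 0$ be the duration of an activity period and $D_{sleep} \ge 0$ the duration of the sleep period, so that a duty cycle has duration $D_{act}+D_{sleep}$, and define the capacity $C_{RTXP} = \left\lfloor \frac{D_{act}+D_{sleep}}{D_{act}} \right\rfloor$. Let $n \in \mathbb{N}$ be a hop-count and let $p \in \mathbb{N}$ be the number of packets present in a 2-hop neighborhood of nodes at hop-count $n$ at the start of a duty cycle. Assume packets can be lost only through collisions, that coordinates are unique in every 2-hop neighborhood and the backoff function is bijective. If $p < C_{RTXP}$, then every one of these $p$ packets reaches a node at hop-count $n-1$ within at most one duty-cycle period.
   Context: Protocol model (RTXP): nodes are globally synchronized and duty-cycled. Each duty cycle consists of a sequence of activity periods, each of duration $D_{act}$, followed by sleeping, the total duty-cycle duration being $D_{act}+D_{sleep}$. In each activity period, nodes at hop-count $n$ (distance in hops to the sink) holding a packet contend for the channel in a backoff phase: each node's backoff time is $f(c)$ where $c$ is its virtual coordinate and $f$ a fixed function; the node whose backoff timer expires first sends a jamming code and wins; nodes detecting a jamming code earlier lose (2-hop interference model: nodes detect jamming codes of all nodes within two hops). The winner transmits its packet, which is received by neighbors at hop-count $n-1$, one of which forwards it. A node that loses the contention may request a further (secondary) activity period immediately following the current one, so that contention is repeated in successive activity periods until the end of the duty cycle. Thus in each activity period one packet in a 2-hop neighborhood wins the contention and makes one hop, and a duty cycle contains at most $C_{RTXP}$ activity periods. *)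

theory Defs
  imports Complex_Main
begin

definition C_RTXP :: "real \<Rightarrow> real \<Rightarrow> nat" where
  "C_RTXP Dact Dsleep = nat \<lfloor>(Dact + Dsleep) / Dact\<rfloor>"

text \<open>Node w wins the backoff contention among the contending nodes A: its backoff
  timer f (coord w) expires strictly first, so every other contender detects its
  jamming code earlier and loses.\<close>
definition backoff_winner ::
  "('node \<Rightarrow> 'c) \<Rightarrow> ('c \<Rightarrow> real) \<Rightarrow> 'node set \<Rightarrow> 'node \<Rightarrow> bool" where
  "backoff_winner coord f A w \<longleftrightarrow>
     w \<in> A \<and> (\<forall>v\<in>A. v \<noteq> w \<longrightarrow> f (coord w) < f (coord v))"

text \<open>An RTXP execution of one duty cycle in the 2-hop neighbourhood under consideration.
  pending k = packets still waiting at hop-count-n nodes at the start of activity period k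
  (period k occupies the time interval [k*Dact, (k+1)*Dact) of the duty cycle);
  holder q = node holding packet q; hop = hop-count of nodes;
  sender k / sent k / receiver k = winning node, transmitted packet and forwarding node
  of activity period k.
  In each of the C activity periods of the duty cycle: if the contention has a unique
  winner, the winner transmits one of its packets, which is received (without loss) by a
  neighbour at hop-count one less, and leaves the pending set; losers keep their packets
  (they request secondary activity periods).  If there is no unique winner (collision),
  packets may be lost: the pending set may shrink arbitrarily.\<close>
definition rtxp_run ::
  "nat \<Rightarrow> ('node \<Rightarrow> 'c) \<Rightarrow> ('c \<Rightarrow> real) \<Rightarrow> ('node \<Rightarrow> nat) \<Rightarrow> ('pkt \<Rightarrow> 'node) \<Rightarrow>
   'pkt set \<Rightarrow> (nat \<Rightarrow> 'pkt set) \<Rightarrow> (nat \<Rightarrow> 'node) \<Rightarrow> (nat \<Rightarrow> 'pkt) \<Rightarrow> (nat \<Rightarrow> 'node) \<Rightarrow> bool"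
  where
  "rtxp_run C coord f hop holder P pending sender sent receiver \<longleftrightarrow>
     pending 0 = P \<and>
     (\<forall>k<C.
        (pending k \<noteq> {} \<and> (\<exists>w. backoff_winner coord f (holder ` pending k) w) \<longrightarrow>
           backoff_winner coord f (holder ` pending k) (sender k) \<and>
           sent k \<in> pending k \<and> holder (sent k) = sender k \<and>
           hop (receiver k) = hop (sender k) - 1 \<and>
           pending (Suc k) = pending k - {sent k}) \<and>
        (\<not> (pending k \<noteq> {} \<and> (\<exists>w. backoff_winner coord f (holder ` pending k) w)) \<longrightarrow>
           pending (Suc k) \<subseteq> pending k))"

end

theory Submission
  imports Defs
begin

lemma winner_exists:
  assumes "finite S" "S \<noteq> {}" "inj_on coord S" "inj f"
  shows "\<exists>w. backoff_winner coord f S w"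
proof -
  obtain w where w: "w \<in> S" "\<forall>v\<in>S. f (coord w) \<le> f (coord v)"
  proof -
    let ?m = "Min ((\<lambda>x. f (coord x)) ` S)"
    have "?m \<in> (\<lambda>x. f (coord x)) ` S" using assms(1,2) by (intro Min_in) auto
    then obtain w where "w \<in> S" "f (coord w) = ?m" by auto
    moreover have "\<forall>v\<in>S. ?m \<le> f (coord v)" using assms(1) by auto
    ultimately show ?thesis using that by metis
  qed
  have "\<forall>v\<in>S. v \<noteq> w \<longrightarrow> f (coord w) < f (coord v)"
  proof (intro ballI impI)
    fix v assume v: "v \<in> S" "v \<noteq> w"
    then have "coord v \<noteq> coord w" using assms(3) w(1) by (meson inj_on_def)
    then have "f (coord v) \<noteq> f (coord w)" using assms(4) by (meson injD)
    then show "f (coord w) < f (coord v)" using w(2) v(1) by force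
  qed
  then show ?thesis using w(1) unfolding backoff_winner_def by blast
qed

theorem mainTheorem2:
  fixes Dact Dsleep :: real
    and n p :: nat
    and coord :: "'node \<Rightarrow> 'c" and f :: "'c \<Rightarrow> real"
    and hop :: "'node \<Rightarrow> nat" and holder :: "'pkt \<Rightarrow> 'node"
    and P :: "'pkt set"
    and pending :: "nat \<Rightarrow> 'pkt set"
    and sender receiver :: "nat \<Rightarrow> 'node" and sent :: "nat \<Rightarrow> 'pkt"
  assumes "Dact > 0" and "Dsleep \<ge> 0"
    and "finite P" and "card P = p"
    and "\<forall>q\<in>P. hop (holder q) = n"
    and "inj_on coord (holder ` P)"
    and "inj f"
    and "rtxp_run (C_RTXP Dact Dsleep) coord f hop holder P pending sender sent receiver"
    and "p < C_RTXP Dact Dsleep"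
  shows "\<forall>q\<in>P. \<exists>k < C_RTXP Dact Dsleep.
           sent k = q \<and> q \<in> pending k \<and> q \<notin> pending (Suc k) \<and>
           hop (receiver k) = n - 1 \<and>
           real (k + 1) * Dact \<le> Dact + Dsleep"
proof -
  define C where "C = C_RTXP Dact Dsleep"
  have run: "pending 0 = P"
    "\<And>k. k < C \<Longrightarrow> (pending k \<noteq> {} \<and> (\<exists>w. backoff_winner coord f (holder ` pending k) w) \<longrightarrow>
           backoff_winner coord f (holder ` pending k) (sender k) \<and>
           sent k \<in> pending k \<and> holder (sent k) = sender k \<and>
           hop (receiver k) = hop (sender k) - 1 \<and>
           pending (Suc k) = pending k - {sent k}) \<and>
        (\<not> (pending k \<noteq> {} \<and> (\<exists>w. backoff_winner coord f (holder ` pending k) w)) \<longrightarrow>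
           pending (Suc k) \<subseteq> pending k)"
    using assms(8) unfolding rtxp_run_def C_def by auto
  have win: "\<exists>w. backoff_winner coord f (holder ` pending k) w"
    if "pending k \<subseteq> P" "pending k \<noteq> {}" for k
    apply (rule winner_exists)
    using that assms(3,6,7) by (auto intro: finite_subset inj_on_subset)
  have inv: "k \<le> C \<Longrightarrow> pending k \<subseteq> P \<and> card (pending k) = p - k" for k
  proof (induction k)
    case 0 then show ?case using run(1) assms(4) by simp
  next
    case (Suc k)
    then have IH: "pending k \<subseteq> P" "card (pending k) = p - k" and kC: "k < C" by auto
    have fin: "finite (pending k)" using IH(1) assms(3) finite_subset by blast
    show ?case
    proof (cases "pending k = {}")
      case True
      then have "pending (Suc k) = {}" using run(2)[OF kC] by blast
      then show ?thesis using IH True fin by simp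
    next
      case False
      with win[OF IH(1) False] run(2)[OF kC]
      have "sent k \<in> pending k" "pending (Suc k) = pending k - {sent k}" by auto
      then show ?thesis using IH fin by auto
    qed
  qed
  have pC: "p < C" using assms(9) C_def by simp
  have emp: "pending p = {}"
  proof -
    have "pending p \<subseteq> P" "card (pending p) = 0" using inv[of p] pC by auto
    then show ?thesis using assms(3) finite_subset by fastforce
  qed
  have CD: "real C * Dact \<le> Dact + Dsleep"
  proof -
    have "real C = of_int \<lfloor>(Dact + Dsleep) / Dact\<rfloor>"
      unfolding C_def C_RTXP_def using assms(1,2) by simp
    also have "\<dots> \<le> (Dact + Dsleep) / Dact" by simp
    finally show ?thesis using assms(1) by (simp add: pos_le_divide_eq)
  qed
  show ?thesis unfolding C_def[symmetric]
  proof
    fix q assume qP: "q \<in> P"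
    define j where "j = (LEAST j. q \<notin> pending j)"
    have ex: "q \<notin> pending p" using emp by simp
    have j1: "q \<notin> pending j" unfolding j_def by (rule LeastI[of _ p], fact)
    have jp: "j \<le> p" unfolding j_def by (rule Least_le, fact)
    have j0: "j \<noteq> 0" using j1 run(1) qP by (metis)
    then obtain k where jk: "j = Suc k" by (cases j) auto
    have qk: "q \<in> pending k" using not_less_Least[of k "\<lambda>j. q \<notin> pending j"] jk j_def by auto
    have kC: "k < C" using jk jp pC by simp
    have sub: "pending k \<subseteq> P" using inv[of k] kC by simp
    have ne: "pending k \<noteq> {}" using qk by auto
    from win[OF sub ne] run(2)[OF kC] ne
    have R: "sent k \<in> pending k" "holder (sent k) = sender k"
      "hop (receiver k) = hop (sender k) - 1" "pending (Suc k) = pending k - {sent k}" by auto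
    have sq: "sent k = q" using R(4) qk j1 jk by auto
    have "hop (receiver k) = n - 1" using R(2,3) sq assms(5) qP by auto
    moreover have "real (k + 1) * Dact \<le> Dact + Dsleep"
    proof -
      have "real (k+1) * Dact \<le> real C * Dact" using kC assms(1) by (intro mult_right_mono) auto
      then show ?thesis using CD by linarith
    qed
    ultimately show "\<exists>k<C. sent k = q \<and> q \<in> pending k \<and> q \<notin> pending (Suc k) \<and>
           hop (receiver k) = n - 1 \<and> real (k + 1) * Dact \<le> Dact + Dsleep"
      using kC sq qk j1 jk by auto
  qed
qed

end
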